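(* Assume the linear-model assumption and the irrepresentable condition from the context. Let $S\subseteq S^*$ be fixed, and let real numbers $(\tilde Z_i)_{i\in[d]\setminus S}$ and positive numbers $(\varepsilon_i)_{i\in[d]\setminus S}$ be given. Suppose there exists $\hat i\in[d]\setminus S$ such that (a) $\hat i\in\arg\max_{i\in[d]\setminus S}\{|\tilde Z_i|+\varepsilon_i\}$; (b) $|\tilde Z_i-Z_i^S|\le\varepsilon_i$ for all $i\in[d]\setminus S$; (c) $|\tilde Z_{\hat i}|>\frac{1+\mu_{S^*}}{1-\mu_{S^*}}\varepsilon_{\hat i}$. Then $|Z_{\hat i}^S|>\mu_{S^*}\max_{i\in S^*}|Z_i^S|$.
   Context: $(x,y)$ is a square-integrable random pair with $x\in\mathbb{R}^d$. Linear-model assumption: $\mathbb{E}[x]=0$, $y=\langle\beta^*,x\rangle+\epsilon$, $\mathbb{E}[\epsilon\mid x]=0$; $S^*=\mathrm{supp}(\beta^* )$, $s^*=|S^*|$. $\Sigma$ is the covariance of $x$, $\Sigma_F$ its principal submatrix on $F\subseteq[d]$, and $\mu_F=\max_{j\notin F}\|\Sigma_F^{-1}\mathrm{Cov}(x_F,x_j)\|_1$. Irrepresentable condition: for all $|F|=s^*$, $\Sigma_F$ is invertible and $0\le\mu_F<1$. $\mathcal{R}(\beta)=\mathbb{E}[(y-\langle x,\beta\rangle)^2]$, $\beta^S\in\arg\min_{\mathrm{supp}(\beta)\subseteq S}\mathcal{R}(\beta)$, and $Z_i^S=\mathbb{E}[x_i(y-\langle x,\beta^S\rangle)]$. *)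

theory Defs
  imports "HOL-Probability.Probability"
begin

definition supp :: "real^'d \<Rightarrow> 'd set" where
  "supp \<beta> = {i. \<beta> $ i \<noteq> 0}"

definition cov :: "'a measure \<Rightarrow> ('a \<Rightarrow> real) \<Rightarrow> ('a \<Rightarrow> real) \<Rightarrow> real" where
  "cov M U V = (\<integral>\<omega>. (U \<omega> - (\<integral>\<eta>. U \<eta> \<partial>M)) * (V \<omega> - (\<integral>\<eta>. V \<eta> \<partial>M)) \<partial>M)"

definition Sigma :: "'a measure \<Rightarrow> ('a \<Rightarrow> real^'d) \<Rightarrow> 'd \<Rightarrow> 'd \<Rightarrow> real" where
  "Sigma M x i j = cov M (\<lambda>\<omega>. x \<omega> $ i) (\<lambda>\<omega>. x \<omega> $ j)"

definition subm_invertible :: "('d \<Rightarrow> 'd \<Rightarrow> real) \<Rightarrow> 'd set \<Rightarrow> bool" where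
  "subm_invertible \<Sigma> F \<longleftrightarrow>
     (\<forall>v::'d \<Rightarrow> real. (\<forall>i\<in>F. (\<Sum>k\<in>F. \<Sigma> i k * v k) = 0) \<longrightarrow> (\<forall>k\<in>F. v k = 0))"

text \<open>Sigma_F^{-1} Cov(x_F, x_j), as a vector supported on F.\<close>
definition subm_solve :: "('d \<Rightarrow> 'd \<Rightarrow> real) \<Rightarrow> 'd set \<Rightarrow> 'd \<Rightarrow> ('d \<Rightarrow> real)" where
  "subm_solve \<Sigma> F j = (THE w. (\<forall>k. k \<notin> F \<longrightarrow> w k = 0) \<and>
       (\<forall>i\<in>F. (\<Sum>k\<in>F. \<Sigma> i k * w k) = \<Sigma> i j))"

text \<open>mu_F = max_{j notin F} || Sigma_F^{-1} Cov(x_F,x_j) ||_1 (convention: max over empty set = 0).\<close>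
definition mu :: "('d::finite \<Rightarrow> 'd \<Rightarrow> real) \<Rightarrow> 'd set \<Rightarrow> real" where
  "mu \<Sigma> F = Max (insert 0 {(\<Sum>k\<in>F. \<bar>subm_solve \<Sigma> F j k\<bar>) | j. j \<notin> F})"

definition risk :: "'a measure \<Rightarrow> ('a \<Rightarrow> real^'d) \<Rightarrow> ('a \<Rightarrow> real) \<Rightarrow> real^'d \<Rightarrow> real" where
  "risk M x y \<beta> = (\<integral>\<omega>. (y \<omega> - \<beta> \<bullet> x \<omega>)\<^sup>2 \<partial>M)"

definition Zres :: "'a measure \<Rightarrow> ('a \<Rightarrow> real^'d) \<Rightarrow> ('a \<Rightarrow> real) \<Rightarrow> real^'d \<Rightarrow> 'd \<Rightarrow> real" where
  "Zres M x y \<beta> i = (\<integral>\<omega>. x \<omega> $ i * (y \<omega> - \<beta> \<bullet> x \<omega>) \<partial>M)"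

end

theory Submission
  imports Defs
begin

lemma abs_prod_le_sq: "norm ((a::real) * b) \<le> norm (a\<^sup>2 + b\<^sup>2)"
proof -
  have "0 \<le> (\<bar>a\<bar> - \<bar>b\<bar>)\<^sup>2" by simp
  also have "\<dots> = a\<^sup>2 + b\<^sup>2 - 2 * \<bar>a\<bar> * \<bar>b\<bar>" by (simp add: power2_diff)
  finally have "2 * \<bar>a\<bar> * \<bar>b\<bar> \<le> a\<^sup>2 + b\<^sup>2" by simp
  moreover have "\<bar>a\<bar> * \<bar>b\<bar> \<ge> 0" by simp
  ultimately have "\<bar>a\<bar> * \<bar>b\<bar> \<le> a\<^sup>2 + b\<^sup>2" by linarith
  thus ?thesis by (simp add: abs_mult)
qed

lemma quad_neg: fixes Z A t :: real assumes "A \<ge> 0" "t = Z / (A + 1)" "Z \<noteq> 0"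
  shows "- 2 * t * Z + t\<^sup>2 * A < 0"
proof -
  have Zt: "Z = t * (A + 1)" using assms by simp
  have "t \<noteq> 0" using assms Zt by auto
  hence "t\<^sup>2 > 0" by simp
  have "- 2 * t * Z + t\<^sup>2 * A = - (t\<^sup>2 * (A + 2))" unfolding Zt by (simp add: power2_eq_square algebra_simps)
  also have "\<dots> < 0" using \<open>t\<^sup>2 > 0\<close> assms(1) by simp
  finally show ?thesis .
qed

lemma fo_cond:
  fixes r X :: "'a \<Rightarrow> real"
  assumes r2: "integrable M (\<lambda>w. (r w)\<^sup>2)" and X2: "integrable M (\<lambda>w. (X w)\<^sup>2)"
    and rm: "r \<in> borel_measurable M" and Xm: "X \<in> borel_measurable M"
    and le: "\<And>t. (\<integral>w. (r w)\<^sup>2 \<partial>M) \<le> (\<integral>w. (r w - t * X w)\<^sup>2 \<partial>M)"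
  shows "(\<integral>w. X w * r w \<partial>M) = 0"
proof -
  have iXr: "integrable M (\<lambda>w. X w * r w)"
  proof (rule Bochner_Integration.integrable_bound[OF Bochner_Integration.integrable_add[OF X2 r2]])
    show "(\<lambda>w. X w * r w) \<in> borel_measurable M" using rm Xm by measurable
    show "AE w in M. norm (X w * r w) \<le> norm ((X w)\<^sup>2 + (r w)\<^sup>2)"
      by (intro AE_I2) (rule abs_prod_le_sq)
  qed
  define A where "A = (\<integral>w. (X w)\<^sup>2 \<partial>M)"
  define Z where "Z = (\<integral>w. X w * r w \<partial>M)"
  have A0: "A \<ge> 0" unfolding A_def by simp
  have expand: "(\<integral>w. (r w - t * X w)\<^sup>2 \<partial>M) = (\<integral>w. (r w)\<^sup>2 \<partial>M) - 2 * t * Z + t\<^sup>2 * A" for t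
  proof -
    have "(\<lambda>w. (r w - t * X w)\<^sup>2) = (\<lambda>w. ((r w)\<^sup>2 - (2 * t) * (X w * r w)) + t\<^sup>2 * (X w)\<^sup>2)"
      by (rule ext) (simp add: power2_eq_square algebra_simps)
    hence "(\<integral>w. (r w - t * X w)\<^sup>2 \<partial>M) = (\<integral>w. ((r w)\<^sup>2 - (2 * t) * (X w * r w)) + t\<^sup>2 * (X w)\<^sup>2 \<partial>M)"
      by simp
    also have "\<dots> = (\<integral>w. (r w)\<^sup>2 - (2 * t) * (X w * r w) \<partial>M) + (\<integral>w. t\<^sup>2 * (X w)\<^sup>2 \<partial>M)"
      by (rule Bochner_Integration.integral_add) (use r2 X2 iXr in auto)
    also have "(\<integral>w. (r w)\<^sup>2 - (2 * t) * (X w * r w) \<partial>M) = (\<integral>w. (r w)\<^sup>2 \<partial>M) - (\<integral>w. (2 * t) * (X w * r w) \<partial>M)"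
      by (rule Bochner_Integration.integral_diff) (use r2 iXr in auto)
    finally show ?thesis unfolding Z_def A_def by simp
  qed
  have "Z = 0"
  proof (rule ccontr)
    assume "Z \<noteq> 0"
    define t where "t = Z / (A + 1)"
    have "0 \<le> - 2 * t * Z + t\<^sup>2 * A" using le[of t] expand[of t] by simp
    moreover have "- 2 * t * Z + t\<^sup>2 * A < 0" using quad_neg[OF A0 t_def \<open>Z \<noteq> 0\<close>] .
    ultimately show False by simp
  qed
  thus ?thesis unfolding Z_def .
qed


theorem mainTheorem5:
  fixes M :: "'a measure" and x :: "'a \<Rightarrow> real^'d" and y \<epsilon> :: "'a \<Rightarrow> real"
    and \<beta>star \<beta>S :: "real^'d" and S :: "'d set"
    and Zt eps :: "'d \<Rightarrow> real" and ihat :: 'd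
  assumes M: "prob_space M"
    and x_meas: "x \<in> borel_measurable M" and y_meas: "y \<in> borel_measurable M"
    and x_sq: "integrable M (\<lambda>\<omega>. (norm (x \<omega>))\<^sup>2)" and y_sq: "integrable M (\<lambda>\<omega>. (y \<omega>)\<^sup>2)"
    and x_mean: "\<And>i. (\<integral>\<omega>. x \<omega> $ i \<partial>M) = 0"
    and model: "\<And>\<omega>. \<omega> \<in> space M \<Longrightarrow> y \<omega> = \<beta>star \<bullet> x \<omega> + \<epsilon> \<omega>"
    and noise: "AE \<omega> in M. real_cond_exp M (vimage_algebra (space M) x borel) \<epsilon> \<omega> = 0"
    and irrep: "\<And>F. card F = card (supp \<beta>star) \<Longrightarrow>
                   subm_invertible (Sigma M x) F \<and> 0 \<le> mu (Sigma M x) F \<and> mu (Sigma M x) F < 1"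
    and S_sub: "S \<subseteq> supp \<beta>star"
    and \<beta>S_supp: "supp \<beta>S \<subseteq> S"
    and \<beta>S_min: "\<And>\<beta>. supp \<beta> \<subseteq> S \<Longrightarrow> risk M x y \<beta>S \<le> risk M x y \<beta>"
    and eps_pos: "\<And>i. i \<notin> S \<Longrightarrow> eps i > 0"
    and ihat: "ihat \<notin> S"
    and a: "\<And>i. i \<notin> S \<Longrightarrow> \<bar>Zt i\<bar> + eps i \<le> \<bar>Zt ihat\<bar> + eps ihat"
    and b: "\<And>i. i \<notin> S \<Longrightarrow> \<bar>Zt i - Zres M x y \<beta>S i\<bar> \<le> eps i"
    and c: "\<bar>Zt ihat\<bar> > (1 + mu (Sigma M x) (supp \<beta>star)) / (1 - mu (Sigma M x) (supp \<beta>star)) * eps ihat"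
  shows "\<bar>Zres M x y \<beta>S ihat\<bar> >
           mu (Sigma M x) (supp \<beta>star) * Max (insert 0 ((\<lambda>i. \<bar>Zres M x y \<beta>S i\<bar>) ` supp \<beta>star))"
proof -
  define m where "m = mu (Sigma M x) (supp \<beta>star)"
  have m0: "0 \<le> m" and m1: "m < 1" using irrep[of "supp \<beta>star"] unfolding m_def by auto
  define Z where "Z = Zres M x y \<beta>S"
  define r where "r = (\<lambda>w. y w - \<beta>S \<bullet> x w)"
  have xim: "(\<lambda>w. x w $ i) \<in> borel_measurable M" for i
    using measurable_compose[OF x_meas borel_measurable_nth] .
  have rm: "r \<in> borel_measurable M" unfolding r_def using x_meas y_meas by measurable
  have xi2: "integrable M (\<lambda>w. (x w $ i)\<^sup>2)" for i
  proof (rule Bochner_Integration.integrable_bound[OF x_sq])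
    show "(\<lambda>w. (x w $ i)\<^sup>2) \<in> borel_measurable M" using xim[of i] by measurable
    show "AE w in M. norm ((x w $ i)\<^sup>2) \<le> norm ((norm (x w))\<^sup>2)"
    proof (intro AE_I2)
      fix w
      have "\<bar>x w $ i\<bar> \<le> norm (x w)" by (rule component_le_norm_cart)
      hence "\<bar>x w $ i\<bar>\<^sup>2 \<le> (norm (x w))\<^sup>2" by (intro power_mono) auto
      thus "norm ((x w $ i)\<^sup>2) \<le> norm ((norm (x w))\<^sup>2)" by simp
    qed
  qed
  have r2: "integrable M (\<lambda>w. (r w)\<^sup>2)"
  proof (rule Bochner_Integration.integrable_bound)
    show "integrable M (\<lambda>w. 2 * (y w)\<^sup>2 + 2 * (norm \<beta>S)\<^sup>2 * (norm (x w))\<^sup>2)"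
      using y_sq x_sq by auto
    show "(\<lambda>w. (r w)\<^sup>2) \<in> borel_measurable M" using rm by measurable
    show "AE w in M. norm ((r w)\<^sup>2) \<le> norm (2 * (y w)\<^sup>2 + 2 * (norm \<beta>S)\<^sup>2 * (norm (x w))\<^sup>2)"
    proof (intro AE_I2)
      fix w
      have cs: "\<bar>\<beta>S \<bullet> x w\<bar> \<le> norm \<beta>S * norm (x w)" by (rule Cauchy_Schwarz_ineq2)
      hence cs2: "(\<beta>S \<bullet> x w)\<^sup>2 \<le> (norm \<beta>S)\<^sup>2 * (norm (x w))\<^sup>2"
        by (metis abs_ge_zero power2_abs power_mono power_mult_distrib)
      have "(r w)\<^sup>2 \<le> 2 * (y w)\<^sup>2 + 2 * (\<beta>S \<bullet> x w)\<^sup>2"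
      proof -
        have "0 \<le> (y w + \<beta>S \<bullet> x w)\<^sup>2" by simp
        thus ?thesis unfolding r_def by (simp add: power2_eq_square algebra_simps)
      qed
      also have "\<dots> \<le> 2 * (y w)\<^sup>2 + 2 * (norm \<beta>S)\<^sup>2 * (norm (x w))\<^sup>2" using cs2 by simp
      finally show "norm ((r w)\<^sup>2) \<le> norm (2 * (y w)\<^sup>2 + 2 * (norm \<beta>S)\<^sup>2 * (norm (x w))\<^sup>2)"
        by simp
    qed
  qed
  have ZS: "Z i = 0" if iS: "i \<in> S" for i
  proof -
    have "(\<integral>w. x w $ i * r w \<partial>M) = 0"
    proof (rule fo_cond[OF r2 xi2 rm xim])
      fix t
      define \<beta> where "\<beta> = \<beta>S + t *\<^sub>R axis i 1"
      have "supp \<beta> \<subseteq> S"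
      proof
        fix j assume "j \<in> supp \<beta>"
        hence "\<beta>S $ j + t * (axis i 1 :: real^'d) $ j \<noteq> 0" unfolding supp_def \<beta>_def by simp
        thus "j \<in> S" using iS \<beta>S_supp unfolding supp_def axis_def by (cases "j = i") auto
      qed
      hence "risk M x y \<beta>S \<le> risk M x y \<beta>" by (rule \<beta>S_min)
      moreover have "\<beta> \<bullet> x w = \<beta>S \<bullet> x w + t * x w $ i" for w
        unfolding \<beta>_def by (simp add: inner_add_left inner_commute[of "axis i 1"] inner_axis)
      ultimately show "(\<integral>w. (r w)\<^sup>2 \<partial>M) \<le> (\<integral>w. (r w - t * x w $ i)\<^sup>2 \<partial>M)"
        unfolding risk_def r_def by (simp add: algebra_simps)
    qed
    thus ?thesis unfolding Z_def Zres_def r_def .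
  qed
  define B where "B = \<bar>Zt ihat\<bar> + eps ihat"
  have epsh: "eps ihat > 0" using eps_pos ihat by simp
  have bnd: "\<bar>Z i\<bar> \<le> B" for i
  proof (cases "i \<in> S")
    case True thus ?thesis using ZS epsh unfolding B_def by simp
  next
    case False
    have "\<bar>Z i\<bar> \<le> \<bar>Zt i\<bar> + eps i" using b[OF False] unfolding Z_def by linarith
    thus ?thesis using a[OF False] unfolding B_def by linarith
  qed
  have Mx: "Max (insert 0 ((\<lambda>i. \<bar>Z i\<bar>) ` supp \<beta>star)) \<le> B"
    using bnd epsh unfolding B_def by (subst Max_le_iff) auto
  have low: "\<bar>Z ihat\<bar> \<ge> \<bar>Zt ihat\<bar> - eps ihat" using b[OF ihat] unfolding Z_def by linarith
  have "(1 + m) / (1 - m) * eps ihat * (1 - m) < \<bar>Zt ihat\<bar> * (1 - m)"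
    using c m1 unfolding m_def[symmetric] by (intro mult_strict_right_mono) auto
  hence key: "(1 + m) * eps ihat < \<bar>Zt ihat\<bar> * (1 - m)" using m1 by simp
  have "m * Max (insert 0 ((\<lambda>i. \<bar>Z i\<bar>) ` supp \<beta>star)) \<le> m * B"
    using Mx m0 by (rule mult_left_mono)
  also have "\<dots> < \<bar>Zt ihat\<bar> - eps ihat" using key unfolding B_def by (simp add: algebra_simps)
  also have "\<dots> \<le> \<bar>Z ihat\<bar>" by (rule low)
  finally show ?thesis unfolding m_def Z_def .
qed

end
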